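(* There exist a joint distribution $P$ of $(x,a,y)$ with two protected groups $a\in\{1,2\}$ and binary labels $y\in\{0,1\}$, a score function $\mathcal{R}(x,a)\in\mathbb{R}$, and a choice of bias measure $\mathcal{B}$ (demographic parity or equal opportunity) such that the post-processing method (described in the context), with loss $\mathcal{L}$ equal to the misclassification rate, is not slack-consistent: there is an individual $(x,a)$ and slacks $0<\beta_1<\beta_2<\beta_3$ such that the values $f_{\beta_1}(x,a), f_{\beta_2}(x,a), f_{\beta_3}(x,a)$ are neither non-decreasing nor non-increasing.
   Context: Setting: individuals are pairs $(x,a)$ with features $x$ and group $a\in\{1,2\}$, label $y\in\{0,1\}$, all distributed according to $P$. A (possibly stochastic) classifier $f$ assigns to each $(x,a)$ a probability $f(x,a)\in[0,1]$ of a positive prediction. Demographic-parity bias: $\mathcal{B}(f)=E[f(x,a)\mid a=1]-E[f(x,a)\mid a=2]$. Equal-opportunity bias: $\mathcal{B}(f)=E[f(x,a)\mid a=1,y=1]-E[f(x,a)\mid a=2,y=1]$. Misclassification loss: $\mathcal{L}(f)=P(\text{prediction}\neq y)$ where the prediction is drawn positive with probability $f(x,a)$. Normalized thresholds: for a score function $\mathcal{R}$ and group $a$, a normalized threshold $\tau\in[0,1]$ denotes a (possibly randomized) threshold classifier on $\mathcal{R}(x,a)$ within group $a$, given by a randomization over at most two adjacent deterministic thresholds, whose positive prediction rate in group $a$ equals $1-\tau$. A pair $(\tau_1,\tau_2)$ thus defines a classifier (group $a$ uses $\tau_a$), and $\mathcal{L}(\tau_1,\tau_2)$, $\mathcal{B}(\tau_1,\tau_2)$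 denote its loss and bias. Post-processing method with slack $\beta>0$: among all $(\tau_1,\tau_2)\in[0,1]^2$ minimizing $\mathcal{L}(\tau_1,\tau_2)$ subject to $|\mathcal{B}(\tau_1,\tau_2)|\le\beta$, keep those with smallest $|\mathcal{B}|$; among those keep those with smallest $\tau_1$; among those return the one with smallest $\tau_2$. The resulting classifier is denoted $f_\beta$. Slack-consistency: a procedure producing $f_\beta$ for each slack $\beta>0$ is slack-consistent if for every individual $(x,a)$ the map $\beta\mapsto f_\beta(x,a)$ is monotonic (for all $\beta_1<\beta_2<\beta_3$, either $f_{\beta_1}(x,a)\le f_{\beta_2}(x,a)\le f_{\beta_3}(x,a)$ or $f_{\beta_1}(x,a)\ge f_{\beta_2}(x,a)\ge f_{\beta_3}(x,a)$). *)

theory Defs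
  imports "HOL-Probability.Probability"
begin

text \<open>A population is a discrete joint distribution P of (x, a, y) with
  features x :: real, group a :: nat (in {1,2}) and label y :: nat (in {0,1}).
  A (stochastic) classifier is f :: real \<Rightarrow> nat \<Rightarrow> real, giving the probability
  of a positive prediction.\<close>

type_synonym population = "(real \<times> nat \<times> nat) pmf"
type_synonym classifier = "real \<Rightarrow> nat \<Rightarrow> real"

definition grp :: "real \<times> nat \<times> nat \<Rightarrow> nat" where
  "grp z = fst (snd z)"

definition lbl :: "real \<times> nat \<times> nat \<Rightarrow> nat" where
  "lbl z = snd (snd z)"

definition cond_exp :: "population \<Rightarrow> classifier \<Rightarrow> (real \<times> nat \<times> nat \<Rightarrow> bool) \<Rightarrow> real" where
  "cond_exp P f E =
     measure_pmf.expectation P (\<lambda>z. if E z then f (fst z) (grp z) else 0)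
     / measure_pmf.prob P {z. E z}"

datatype bias_kind = DemographicParity | EqualOpportunity

definition bias :: "bias_kind \<Rightarrow> population \<Rightarrow> classifier \<Rightarrow> real" where
  "bias k P f = (case k of
      DemographicParity \<Rightarrow>
        cond_exp P f (\<lambda>z. grp z = 1) - cond_exp P f (\<lambda>z. grp z = 2)
    | EqualOpportunity \<Rightarrow>
        cond_exp P f (\<lambda>z. grp z = 1 \<and> lbl z = 1) - cond_exp P f (\<lambda>z. grp z = 2 \<and> lbl z = 1))"

definition loss :: "population \<Rightarrow> classifier \<Rightarrow> real" where
  "loss P f = measure_pmf.expectation P
      (\<lambda>z. if lbl z = 1 then 1 - f (fst z) (grp z) else f (fst z) (grp z))"

definition score_above :: "population \<Rightarrow> (real \<Rightarrow> nat \<Rightarrow> real) \<Rightarrow> nat \<Rightarrow> real \<Rightarrow> real" where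
  "score_above P R a r =
     measure_pmf.prob P {z. grp z = a \<and> R (fst z) a > r} / measure_pmf.prob P {z. grp z = a}"

definition score_at :: "population \<Rightarrow> (real \<Rightarrow> nat \<Rightarrow> real) \<Rightarrow> nat \<Rightarrow> real \<Rightarrow> real" where
  "score_at P R a r =
     measure_pmf.prob P {z. grp z = a \<and> R (fst z) a = r} / measure_pmf.prob P {z. grp z = a}"

text \<open>Normalized threshold tau in group a: the randomized threshold classifier on R(x,a)
  (positive above the threshold t, negative below, positive with probability p at t)
  whose positive rate in group a is 1 - tau.\<close>
definition norm_thr :: "population \<Rightarrow> (real \<Rightarrow> nat \<Rightarrow> real) \<Rightarrow> nat \<Rightarrow> real \<Rightarrow> real \<Rightarrow> real" where
  "norm_thr P R a \<tau> x =
     (let q = 1 - \<tau>; r = R x a; G = score_above P R a r; m = score_at P R a r in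
      if m > 0 then max 0 (min 1 ((q - G) / m)) else (if G < q then 1 else 0))"

definition thr_clf :: "population \<Rightarrow> (real \<Rightarrow> nat \<Rightarrow> real) \<Rightarrow> real \<Rightarrow> real \<Rightarrow> classifier" where
  "thr_clf P R \<tau>1 \<tau>2 = (\<lambda>x a. if a = 1 then norm_thr P R 1 \<tau>1 x
                              else if a = 2 then norm_thr P R 2 \<tau>2 x else 0)"

definition Lthr :: "population \<Rightarrow> (real \<Rightarrow> nat \<Rightarrow> real) \<Rightarrow> real \<Rightarrow> real \<Rightarrow> real" where
  "Lthr P R \<tau>1 \<tau>2 = loss P (thr_clf P R \<tau>1 \<tau>2)"

definition Bthr :: "bias_kind \<Rightarrow> population \<Rightarrow> (real \<Rightarrow> nat \<Rightarrow> real) \<Rightarrow> real \<Rightarrow> real \<Rightarrow> real" where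
  "Bthr k P R \<tau>1 \<tau>2 = bias k P (thr_clf P R \<tau>1 \<tau>2)"

definition feasible :: "bias_kind \<Rightarrow> population \<Rightarrow> (real \<Rightarrow> nat \<Rightarrow> real) \<Rightarrow> real \<Rightarrow> real \<Rightarrow> real \<Rightarrow> bool" where
  "feasible k P R \<beta> \<tau>1 \<tau>2 \<longleftrightarrow>
     \<tau>1 \<in> {0..1} \<and> \<tau>2 \<in> {0..1} \<and> \<bar>Bthr k P R \<tau>1 \<tau>2\<bar> \<le> \<beta>"

definition pp_output :: "bias_kind \<Rightarrow> population \<Rightarrow> (real \<Rightarrow> nat \<Rightarrow> real) \<Rightarrow> real \<Rightarrow> real \<Rightarrow> real \<Rightarrow> bool" where
  "pp_output k P R \<beta> \<tau>1 \<tau>2 \<longleftrightarrow>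
     feasible k P R \<beta> \<tau>1 \<tau>2 \<and>
     (\<forall>s1 s2. feasible k P R \<beta> s1 s2 \<longrightarrow>
        Lthr P R \<tau>1 \<tau>2 \<le> Lthr P R s1 s2 \<and>
        (Lthr P R s1 s2 = Lthr P R \<tau>1 \<tau>2 \<longrightarrow>
           \<bar>Bthr k P R \<tau>1 \<tau>2\<bar> \<le> \<bar>Bthr k P R s1 s2\<bar> \<and>
           (\<bar>Bthr k P R s1 s2\<bar> = \<bar>Bthr k P R \<tau>1 \<tau>2\<bar> \<longrightarrow>
              \<tau>1 \<le> s1 \<and> (s1 = \<tau>1 \<longrightarrow> \<tau>2 \<le> s2))))"

definition valid_pop :: "bias_kind \<Rightarrow> population \<Rightarrow> bool" where
  "valid_pop k P \<longleftrightarrow>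
     (\<forall>z \<in> set_pmf P. grp z \<in> {1, 2} \<and> lbl z \<in> {0, 1}) \<and>
     measure_pmf.prob P {z. grp z = 1} > 0 \<and> measure_pmf.prob P {z. grp z = 2} > 0 \<and>
     (k = EqualOpportunity \<longrightarrow>
        measure_pmf.prob P {z. grp z = 1 \<and> lbl z = 1} > 0 \<and>
        measure_pmf.prob P {z. grp z = 2 \<and> lbl z = 1} > 0)"

end

theory Submission
  imports Defs
begin

definition S :: "(real \<times> nat \<times> nat) set" where
  "S = {(0,1,1), (1,1,0), (2,1,0), (0,2,1), (1,2,1)}"
definition PP :: population where "PP = pmf_of_set S"
definition RR :: "real \<Rightarrow> nat \<Rightarrow> real" where "RR x a = (if a = 1 \<and> x \<ge> 1 then 1 else 0)"

lemma S_fin: "finite S" and S_ne: "S \<noteq> {}" and S_card: "card S = 5"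
  by (auto simp: S_def)

lemma prob_PP: "measure_pmf.prob PP A = real (card (S \<inter> A)) / 5"
  unfolding PP_def using S_fin S_ne by (simp add: measure_pmf_of_set S_card)

lemma exp_PP: "measure_pmf.expectation PP (f :: _ \<Rightarrow> real) =
   (f (0,1,1) + f (1,1,0) + f (2,1,0) + f (0,2,1) + f (1,2,1)) / 5"
  unfolding PP_def using S_fin S_ne by (simp add: integral_pmf_of_set S_card del: One_nat_def) (simp add: S_def del: One_nat_def)

lemma g1: "measure_pmf.prob PP {z. grp z = 1} = 3/5"
  by (simp add: prob_PP S_def grp_def)

lemma g2: "measure_pmf.prob PP {z. grp z = 2} = 2/5"
  by (simp add: prob_PP S_def grp_def)

lemma sc:
  "score_above PP RR 1 0 = 2/3" "score_at PP RR 1 0 = 1/3"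
  "score_above PP RR 1 1 = 0" "score_at PP RR 1 1 = 2/3"
  "score_above PP RR 2 0 = 0" "score_at PP RR 2 0 = 1"
  by (simp_all add: score_above_def score_at_def g1 g2 del: One_nat_def)
     (simp_all add: prob_PP S_def grp_def RR_def)

definition vl :: "real \<Rightarrow> real" where "vl t = max 0 (min 1 (1 - 3* t))"
definition vh :: "real \<Rightarrow> real" where "vh t = max 0 (min 1 (3*(1-t)/2))"
definition v2 :: "real \<Rightarrow> real" where "v2 t = max 0 (min 1 (1-t))"

lemma nt:
  "norm_thr PP RR 1 t 0 = vl t"
  "norm_thr PP RR 1 t 1 = vh t"
  "norm_thr PP RR 1 t 2 = vh t"
  "norm_thr PP RR 2 t 0 = v2 t"
  "norm_thr PP RR 2 t 1 = v2 t"
  by (simp_all add: norm_thr_def Let_def RR_def sc vl_def vh_def v2_def del: One_nat_def)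
     (simp_all add: field_simps)

lemma tc:
  "thr_clf PP RR t1 t2 0 1 = vl t1"
  "thr_clf PP RR t1 t2 1 1 = vh t1"
  "thr_clf PP RR t1 t2 2 1 = vh t1"
  "thr_clf PP RR t1 t2 0 2 = v2 t2"
  "thr_clf PP RR t1 t2 1 2 = v2 t2"
  by (simp_all add: thr_clf_def nt del: One_nat_def)

lemma L_eq: "Lthr PP RR t1 t2 = (3 - vl t1 + 2 * vh t1 - 2 * v2 t2) / 5"
  unfolding Lthr_def loss_def exp_PP by (simp add: lbl_def grp_def tc del: One_nat_def)

lemma B_eq: "Bthr DemographicParity PP RR t1 t2 = (vl t1 + 2 * vh t1) / 3 - v2 t2"
  unfolding Bthr_def bias_def cond_exp_def exp_PP g1 g2
  by (simp add: lbl_def grp_def tc del: One_nat_def)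

lemma pp_strict:
  assumes "feasible k P R \<beta> t1 t2"
    and "\<And>s1 s2. feasible k P R \<beta> s1 s2 \<Longrightarrow> (s1, s2) \<noteq> (t1, t2) \<Longrightarrow> Lthr P R t1 t2 < Lthr P R s1 s2"
  shows "pp_output k P R \<beta> t1 t2"
proof -
  have d: "(s1, s2) = (t1, t2) \<or> Lthr P R t1 t2 < Lthr P R s1 s2"
    if "feasible k P R \<beta> s1 s2" for s1 s2 using assms(2)[OF that] by blast
  show ?thesis unfolding pp_output_def
  proof (rule conjI[OF assms(1)], intro allI impI)
    fix s1 s2 assume f: "feasible k P R \<beta> s1 s2"
    from d[OF f] show "Lthr P R t1 t2 \<le> Lthr P R s1 s2 \<and>
        (Lthr P R s1 s2 = Lthr P R t1 t2 \<longrightarrow>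
           \<bar>Bthr k P R t1 t2\<bar> \<le> \<bar>Bthr k P R s1 s2\<bar> \<and>
           (\<bar>Bthr k P R s1 s2\<bar> = \<bar>Bthr k P R t1 t2\<bar> \<longrightarrow>
              t1 \<le> s1 \<and> (s1 = t1 \<longrightarrow> t2 \<le> s2)))"
      by auto
  qed
qed

lemma Bbox: "0 \<le> s1 \<Longrightarrow> s1 \<le> 1 \<Longrightarrow> 0 \<le> s2 \<Longrightarrow> s2 \<le> 1 \<Longrightarrow>
  Bthr DemographicParity PP RR s1 s2 = s2 - s1"
  unfolding B_eq vl_def vh_def v2_def by (auto simp: min_def max_def field_simps)

lemma Llo: "0 \<le> s1 \<Longrightarrow> s1 \<le> 1/3 \<Longrightarrow> 0 \<le> s2 \<Longrightarrow> s2 \<le> 1 \<Longrightarrow>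
  Lthr PP RR s1 s2 = (2 + 3* s1 + 2* s2) / 5"
  unfolding L_eq vl_def vh_def v2_def by (auto simp: min_def max_def)

lemma Lhi: "1/3 \<le> s1 \<Longrightarrow> s1 \<le> 1 \<Longrightarrow> 0 \<le> s2 \<Longrightarrow> s2 \<le> 1 \<Longrightarrow>
  Lthr PP RR s1 s2 = (4 - 3* s1 + 2* s2) / 5"
  unfolding L_eq vl_def vh_def v2_def by (auto simp: min_def max_def)

lemma strict_gen:
  assumes t: "0 \<le> t1" "t1 \<le> 1" "0 \<le> t2" "t2 \<le> 1" "\<bar>t2 - t1\<bar> \<le> \<beta>"
    and H: "\<And>s1 s2. 0 \<le> s1 \<Longrightarrow> s1 \<le> 1 \<Longrightarrow> 0 \<le> s2 \<Longrightarrow> s2 \<le> 1 \<Longrightarrow> \<bar>s2 - s1\<bar> \<le> \<beta> \<Longrightarrow>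
       (s1, s2) \<noteq> (t1, t2) \<Longrightarrow>
       (if t1 \<le> 1/3 then 2 + 3* t1 + 2* t2 else 4 - 3* t1 + 2* t2) <
       (if s1 \<le> 1/3 then 2 + 3* s1 + 2* s2 else 4 - 3* s1 + 2* s2)"
  shows "pp_output DemographicParity PP RR \<beta> t1 t2"
proof (rule pp_strict)
  show "feasible DemographicParity PP RR \<beta> t1 t2"
    using t by (simp add: feasible_def Bbox)
  fix s1 s2 assume f: "feasible DemographicParity PP RR \<beta> s1 s2" "(s1, s2) \<noteq> (t1, t2)"
  then have s: "0 \<le> s1" "s1 \<le> 1" "0 \<le> s2" "s2 \<le> 1" "\<bar>s2 - s1\<bar> \<le> \<beta>"
    by (auto simp: feasible_def Bbox)
  have Lt: "Lthr PP RR t1 t2 = (if t1 \<le> 1/3 then 2 + 3* t1 + 2* t2 else 4 - 3* t1 + 2* t2) / 5"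
    using t Llo Lhi by auto
  have Ls: "Lthr PP RR s1 s2 = (if s1 \<le> 1/3 then 2 + 3* s1 + 2* s2 else 4 - 3* s1 + 2* s2) / 5"
    using s Llo Lhi by auto
  show "Lthr PP RR t1 t2 < Lthr PP RR s1 s2"
    unfolding Lt Ls using H[OF s f(2)] by (simp add: divide_strict_right_mono)
qed

lemma o1: "pp_output DemographicParity PP RR (1/4) 0 0"
  by (rule strict_gen) (auto simp: abs_if neq_iff split: if_splits)

lemma o2: "pp_output DemographicParity PP RR (3/4) 1 (1/4)"
  by (rule strict_gen) (auto simp: abs_if neq_iff split: if_splits)

lemma o3: "pp_output DemographicParity PP RR 1 1 0"
  by (rule strict_gen) (auto simp: abs_if neq_iff split: if_splits)

lemma valid: "valid_pop DemographicParity PP"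
proof -
  have "set_pmf PP = S" unfolding PP_def using S_fin S_ne by simp
  then show ?thesis unfolding valid_pop_def using g1 g2
    by (auto simp: S_def grp_def lbl_def)
qed

lemma pmf_pos: "pmf PP (0, 2, 1) > 0"
  unfolding PP_def using S_fin S_ne by (simp add: S_card) (simp add: S_def)

theorem theorem1:
  shows "\<exists>(P :: population) (R :: real \<Rightarrow> nat \<Rightarrow> real) (k :: bias_kind)
            (x :: real) (a :: nat) (y :: nat) (\<beta>1 :: real) \<beta>2 \<beta>3 \<tau>1 \<tau>2 \<sigma>1 \<sigma>2 \<rho>1 \<rho>2.
     valid_pop k P \<and> pmf P (x, a, y) > 0 \<and>
     0 < \<beta>1 \<and> \<beta>1 < \<beta>2 \<and> \<beta>2 < \<beta>3 \<and>
     pp_output k P R \<beta>1 \<tau>1 \<tau>2 \<and>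
     pp_output k P R \<beta>2 \<sigma>1 \<sigma>2 \<and>
     pp_output k P R \<beta>3 \<rho>1 \<rho>2 \<and>
     (let f1 = thr_clf P R \<tau>1 \<tau>2 x a;
          f2 = thr_clf P R \<sigma>1 \<sigma>2 x a;
          f3 = thr_clf P R \<rho>1 \<rho>2 x a in
      \<not> (f1 \<le> f2 \<and> f2 \<le> f3) \<and> \<not> (f1 \<ge> f2 \<and> f2 \<ge> f3))"
proof -
  have "valid_pop DemographicParity PP \<and> pmf PP (0, 2, 1) > 0 \<and>
     0 < (1/4::real) \<and> (1/4::real) < 3/4 \<and> (3/4::real) < 1 \<and>
     pp_output DemographicParity PP RR (1/4) 0 0 \<and>
     pp_output DemographicParity PP RR (3/4) 1 (1/4) \<and>
     pp_output DemographicParity PP RR 1 1 0 \<and>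
     (let f1 = thr_clf PP RR 0 0 0 2;
          f2 = thr_clf PP RR 1 (1/4) 0 2;
          f3 = thr_clf PP RR 1 0 0 2 in
      \<not> (f1 \<le> f2 \<and> f2 \<le> f3) \<and> \<not> (f1 \<ge> f2 \<and> f2 \<ge> f3))"
  proof (intro conjI)
    show "let f1 = thr_clf PP RR 0 0 0 2;
          f2 = thr_clf PP RR 1 (1/4) 0 2;
          f3 = thr_clf PP RR 1 0 0 2 in
      \<not> (f1 \<le> f2 \<and> f2 \<le> f3) \<and> \<not> (f1 \<ge> f2 \<and> f2 \<ge> f3)"
      unfolding tc Let_def by (simp add: v2_def)
  qed (rule valid pmf_pos o1 o2 o3 | simp)+
  then show ?thesis by (intro exI) assumption
qed

end
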